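(* Let $C=(C_{i,j})$ be an $m\times n$ evolutionary stable (ES) configuration with $m>2$. Then there is no $j$ with $2\le j\le n-1$ such that $C_{m-1,j-1}=C_{m-1,j+1}=0$ and $C_{m-1,j}=1$; that is, no two empty lots in row $m-1$ are separated by a single occupied lot.
   Context: An $m\times n$ configuration is a $0$-$1$ matrix $C=(C_{i,j})$, $1\le i\le m$, $1\le j\le n$; $C_{i,j}=1$ means lot $(i,j)$ is occupied by a house. Row $1$ is the northernmost, row $m$ the southernmost; column $1$ westernmost, column $n$ easternmost. A house at $(i,j)$ is blocked from sunlight if the three lots $(i,j-1)$, $(i,j+1)$, $(i+1,j)$ all lie inside the grid and are all occupied (lots outside the grid never obstruct sunlight). $C$ is permissible if no house is blocked, and maximal if it is permissible and setting any single empty lot to $1$ yields a non-permissible configuration. A maximal configuration is resistant to predators if, for every empty lot, putting a house on it results in that new house being blocked; it is resistant to altruists if, for every empty lot, putting a house on it results in some other (already existing) house being blocked. An ES configuration is a maximal configuration resistant to both predators and altruists. *)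

theory Defs
  imports Main
begin

text \<open>An m x n configuration is modelled as C :: nat => nat => bool, where C i j means
  lot (i,j) is occupied; only indices 1 <= i <= m, 1 <= j <= n are meaningful.
  Row 1 is northernmost, row m southernmost; (i+1,j) is the lot south of (i,j).\<close>

definition in_grid :: "nat \<Rightarrow> nat \<Rightarrow> nat \<Rightarrow> nat \<Rightarrow> bool" where
  "in_grid m n i j \<longleftrightarrow> 1 \<le> i \<and> i \<le> m \<and> 1 \<le> j \<and> j \<le> n"

definition occ :: "nat \<Rightarrow> nat \<Rightarrow> (nat \<Rightarrow> nat \<Rightarrow> bool) \<Rightarrow> nat \<Rightarrow> nat \<Rightarrow> bool" where
  "occ m n C i j \<longleftrightarrow> in_grid m n i j \<and> C i j"

definition blocked :: "nat \<Rightarrow> nat \<Rightarrow> (nat \<Rightarrow> nat \<Rightarrow> bool) \<Rightarrow> nat \<Rightarrow> nat \<Rightarrow> bool" where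
  "blocked m n C i j \<longleftrightarrow> occ m n C i j \<and> j \<ge> 2 \<and> occ m n C i (j - 1) \<and> occ m n C i (j + 1)
     \<and> occ m n C (i + 1) j"

definition permissible :: "nat \<Rightarrow> nat \<Rightarrow> (nat \<Rightarrow> nat \<Rightarrow> bool) \<Rightarrow> bool" where
  "permissible m n C \<longleftrightarrow> (\<forall>i j. \<not> blocked m n C i j)"

definition add_house :: "(nat \<Rightarrow> nat \<Rightarrow> bool) \<Rightarrow> nat \<Rightarrow> nat \<Rightarrow> (nat \<Rightarrow> nat \<Rightarrow> bool)" where
  "add_house C i j = C(i := (C i)(j := True))"

definition maximal :: "nat \<Rightarrow> nat \<Rightarrow> (nat \<Rightarrow> nat \<Rightarrow> bool) \<Rightarrow> bool" where
  "maximal m n C \<longleftrightarrow> permissible m n C \<and>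
     (\<forall>i j. in_grid m n i j \<and> \<not> C i j \<longrightarrow> \<not> permissible m n (add_house C i j))"

definition resistant_predators :: "nat \<Rightarrow> nat \<Rightarrow> (nat \<Rightarrow> nat \<Rightarrow> bool) \<Rightarrow> bool" where
  "resistant_predators m n C \<longleftrightarrow> maximal m n C \<and>
     (\<forall>i j. in_grid m n i j \<and> \<not> C i j \<longrightarrow> blocked m n (add_house C i j) i j)"

definition resistant_altruists :: "nat \<Rightarrow> nat \<Rightarrow> (nat \<Rightarrow> nat \<Rightarrow> bool) \<Rightarrow> bool" where
  "resistant_altruists m n C \<longleftrightarrow> maximal m n C \<and>
     (\<forall>i j. in_grid m n i j \<and> \<not> C i j \<longrightarrow>
        (\<exists>i' j'. occ m n C i' j' \<and> blocked m n (add_house C i j) i' j'))"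

definition ES :: "nat \<Rightarrow> nat \<Rightarrow> (nat \<Rightarrow> nat \<Rightarrow> bool) \<Rightarrow> bool" where
  "ES m n C \<longleftrightarrow> maximal m n C \<and> resistant_predators m n C \<and> resistant_altruists m n C"

end

theory Submission
  imports Defs
begin

locale es =
  fixes m n :: nat and C :: "nat \<Rightarrow> nat \<Rightarrow> bool"
  assumes ES: "ES m n C"
begin

lemma perm: "\<not> blocked m n C i j"
  using ES unfolding ES_def maximal_def permissible_def by blast

lemma nb:
  assumes "1 \<le> i" "i < m" "2 \<le> j" "j < n" "C i j" "C i (j-1)" "C i (j+1)"
  shows "\<not> C (Suc i) j"
  using perm[of i j] assms unfolding blocked_def occ_def in_grid_def by auto

lemma pred:
  assumes "1 \<le> i" "i \<le> m" "1 \<le> j" "j \<le> n" "\<not> C i j"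
  shows "2 \<le> j \<and> j < n \<and> i < m \<and> C i (j-1) \<and> C i (j+1) \<and> C (Suc i) j"
proof -
  have "blocked m n (add_house C i j) i j"
    using ES assms unfolding ES_def resistant_predators_def in_grid_def by blast
  then show ?thesis
    using assms unfolding blocked_def occ_def in_grid_def add_house_def by auto
qed

lemma alt:
  assumes "1 \<le> i" "i \<le> m" "1 \<le> j" "j \<le> n" "\<not> C i j"
  shows "(3 \<le> j \<and> i < m \<and> C i (j-2) \<and> C i (j-1) \<and> C (Suc i) (j-1))
       \<or> (j+2 \<le> n \<and> i < m \<and> C i (j+1) \<and> C i (j+2) \<and> C (Suc i) (j+1))
       \<or> (2 \<le> i \<and> C (i-1) (j-1) \<and> C (i-1) j \<and> C (i-1) (j+1))"
proof -
  obtain i' j' where o: "occ m n C i' j'" and b: "blocked m n (add_house C i j) i' j'"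
    using ES assms unfolding ES_def resistant_altruists_def in_grid_def by blast
  have nb': "\<not> blocked m n C i' j'" by (rule perm)
  from o have ne: "(i',j') \<noteq> (i,j)" using assms unfolding occ_def by auto
  have "(i',j'-1) = (i,j) \<or> (i',j'+1) = (i,j) \<or> (i'+1,j') = (i,j)"
  proof (rule ccontr)
    assume "\<not> ?thesis"
    then have "blocked m n C i' j'" using b ne unfolding blocked_def occ_def add_house_def by (auto split: if_splits)
    then show False using nb' by simp
  qed
  then show ?thesis
  proof (elim disjE)
    assume h: "(i',j'-1) = (i,j)"
    then have "i' = i" "j' = j+1" using b unfolding blocked_def by auto
    then show ?thesis using b o unfolding blocked_def occ_def add_house_def in_grid_def by auto
  next
    assume h: "(i',j'+1) = (i,j)"
    then have "i' = i" "j = j'+1" by auto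
    then show ?thesis using b o unfolding blocked_def occ_def add_house_def in_grid_def
      by (auto simp: numeral_2_eq_2 numeral_3_eq_3)
  next
    assume h: "(i'+1,j') = (i,j)"
    then have "i = i'+1" "j' = j" by auto
    then show ?thesis using b o unfolding blocked_def occ_def add_house_def in_grid_def by auto
  qed
qed

end

definition Dr :: "nat \<Rightarrow> (nat \<Rightarrow> bool) \<Rightarrow> nat \<Rightarrow> bool" where
  "Dr n \<rho> c \<longleftrightarrow> 2 \<le> c \<and> c + 1 \<le> n \<and> \<not> \<rho> (c - 1) \<and> \<rho> c \<and> \<not> \<rho> (c + 1)"

definition Tr :: "nat \<Rightarrow> (nat \<Rightarrow> bool) \<Rightarrow> nat \<Rightarrow> bool" where
  "Tr n \<rho> c \<longleftrightarrow> 2 \<le> c \<and> c + 1 \<le> n \<and> \<rho> (c - 1) \<and> \<rho> c \<and> \<rho> (c + 1)"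

fun PT :: "nat \<Rightarrow> (nat \<Rightarrow> bool) \<Rightarrow> nat \<Rightarrow> bool" where
  "PT n \<rho> 0 = False"
| "PT n \<rho> (Suc c) = (Tr n \<rho> (Suc c) \<or> (PT n \<rho> c \<and> \<not> Dr n \<rho> (Suc c)))"

definition Hr :: "nat \<Rightarrow> (nat \<Rightarrow> bool) \<Rightarrow> bool" where
  "Hr n \<rho> \<longleftrightarrow> (\<forall>c. Dr n \<rho> c \<longrightarrow> PT n \<rho> (c - 1))"

lemma PT_step: "0 < p \<Longrightarrow> PT n \<rho> p = (Tr n \<rho> p \<or> (PT n \<rho> (p - 1) \<and> \<not> Dr n \<rho> p))"
  by (cases p) auto

lemma PT_1: "PT n \<rho> 1 = False"
  by (simp add: Tr_def)

lemma PT_2: "PT n \<rho> 2 = Tr n \<rho> 2"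
  by (simp add: numeral_2_eq_2 Tr_def)

lemma PT_const:
  assumes "p0 \<le> p1" "\<And>q. p0 < q \<Longrightarrow> q \<le> p1 \<Longrightarrow> \<not> Tr n \<rho> q \<and> \<not> Dr n \<rho> q"
  shows "PT n \<rho> p1 = PT n \<rho> p0"
  using assms
proof (induction p1)
  case 0
  then show ?case by simp
next
  case (Suc p)
  show ?case
  proof (cases "p0 = Suc p")
    case True
    then show ?thesis by simp
  next
    case False
    then have "p0 \<le> p" using Suc.prems by simp
    then have "PT n \<rho> p = PT n \<rho> p0" using Suc by simp
    moreover have "\<not> Tr n \<rho> (Suc p) \<and> \<not> Dr n \<rho> (Suc p)" using Suc.prems \<open>p0 \<le> p\<close> by simp
    ultimately show ?thesis by simp
  qed
qed

lemma PT_T: "PT n \<rho> c \<Longrightarrow> \<exists>p\<le>c. Tr n \<rho> p"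
proof (induction c)
  case 0
  then show ?case by simp
next
  case (Suc c)
  then show ?case by (auto intro: le_SucI)
qed

context es
begin

lemma colpos:
  assumes "1 \<le> i" "i \<le> m" "1 \<le> j" "j \<le> n" "\<not> C i j"
  shows "2 \<le> j" "j < n" "i < m"
  using pred[OF assms] by auto

lemma zero_nbrs:
  assumes "1 \<le> i" "i \<le> m" "1 \<le> j" "j \<le> n" "\<not> C i j"
  shows "C i (j-1)" "C i (j+1)" "C (Suc i) j"
  using pred[OF assms] by auto

lemma rowm_full:
  assumes "1 \<le> m" "1 \<le> j" "j \<le> n"
  shows "C m j"
  using pred[of m j] assms by auto

lemma four_ones:
  assumes "1 \<le> b" "b < m" "1 \<le> q" "q + 3 \<le> n"
    "C b q" "C b (q+1)" "C b (q+2)" "C b (q+3)"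
  shows False
proof -
  have a: "\<not> C (Suc b) (q+1)" using nb[of b "q+1"] assms by auto
  have "\<not> C (Suc b) (q+2)" using nb[of b "q+2"] assms by (auto simp: numeral_eq_Suc)
  moreover have "C (Suc b) (q+2)" using zero_nbrs(2)[of "Suc b" "q+1"] a assms
    by (auto simp: numeral_eq_Suc)
  ultimately show False by simp
qed

lemma DX:
  assumes "1 \<le> b" "b + 2 \<le> m" "Dr n (C (Suc b)) c"
  shows "\<not> C b c"
proof
  assume cb: "C b c"
  from assms(3) have c: "2 \<le> c" "c + 1 \<le> n" "\<not> C (Suc b) (c-1)" "C (Suc b) c" "\<not> C (Suc b) (c+1)"
    unfolding Dr_def by auto
  have "\<not> C b (c-1) \<or> \<not> C b (c+1)"
    using nb[of b c] cb c assms by auto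
  then show False
  proof
    assume "\<not> C b (c-1)"
    then have "C (Suc b) (c-1)" using zero_nbrs(3)[of b "c-1"] assms c by auto
    then show False using c by simp
  next
    assume "\<not> C b (c+1)"
    then have "C (Suc b) (c+1)" using zero_nbrs(3)[of b "c+1"] assms c by auto
    then show False using c by simp
  qed
qed

lemma DW:
  assumes "1 \<le> b" "b + 2 \<le> m" "Dr n (C (Suc b)) c"
  shows "2 \<le> b \<and> C (b-1) (c-1) \<and> C (b-1) c \<and> C (b-1) (c+1)"
proof -
  have z: "\<not> C b c" using DX assms by blast
  from assms(3) have c: "2 \<le> c" "c + 1 \<le> n" "\<not> C (Suc b) (c-1)" "\<not> C (Suc b) (c+1)"
    unfolding Dr_def by auto
  show ?thesis using alt[of b c] z c assms by auto
qed

end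

context es
begin

lemma above_zero:
  assumes "1 \<le> a" "Suc a \<le> m" "1 \<le> p" "p \<le> n" "\<not> C (Suc a) p"
  shows "C a p"
  using zero_nbrs(3)[of a p] assms by auto

lemma IW2:
  assumes "1 \<le> a" "Suc a < m" "1 \<le> p0" "p0 + 2 < n"
    "\<not> C (Suc a) p0" "\<not> C (Suc a) (p0+2)" "C (Suc a) (p0+1)"
  shows "\<not> C a (p0+1)"
proof
  assume h: "C a (p0+1)"
  have "C a p0" using above_zero[of a p0] assms by auto
  moreover have "C a (p0+2)" using above_zero[of a "p0+2"] assms by auto
  ultimately have "\<not> C (Suc a) (p0+1)" using nb[of a "p0+1"] h assms by auto
  then show False using assms by simp
qed

lemma IW3:
  assumes "1 \<le> a" "Suc a < m" "1 \<le> p0" "p0 + 3 < n"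
    "\<not> C (Suc a) p0" "\<not> C (Suc a) (p0+3)" "C (Suc a) (p0+1)" "C (Suc a) (p0+2)"
  shows "C a (p0+1) \<noteq> C a (p0+2)"
proof -
  have w0: "C a p0" using above_zero[of a p0] assms by auto
  have w3: "C a (p0+3)" using above_zero[of a "p0+3"] assms by auto
  have "\<not> (C a (p0+1) \<and> C a (p0+2))"
    using four_ones[of a p0] w0 w3 assms by (auto simp: add.assoc)
  moreover have "\<not> (\<not> C a (p0+1) \<and> \<not> C a (p0+2))"
    using zero_nbrs(2)[of a "p0+1"] assms by auto
  ultimately show ?thesis by blast
qed

lemma IW4:
  assumes "1 \<le> a" "Suc a < m" "1 \<le> p0" "p0 + 4 < n"
    "\<not> C (Suc a) p0" "\<not> C (Suc a) (p0+4)" "C (Suc a) (p0+1)" "C (Suc a) (p0+2)" "C (Suc a) (p0+3)"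
  shows "C a (p0+1) \<and> \<not> C a (p0+2) \<and> C a (p0+3)"
proof -
  have w0: "C a p0" using above_zero[of a p0] assms by auto
  have w4: "C a (p0+4)" using above_zero[of a "p0+4"] assms by auto
  have c2: "\<not> C a (p0+2)"
  proof
    assume h2: "C a (p0+2)"
    have z1: "\<not> C a (p0+1)"
    proof
      assume "C a (p0+1)"
      then have "\<not> C (Suc a) (p0+1)" using nb[of a "p0+1"] w0 h2 assms by auto
      then show False using assms by simp
    qed
    have z3: "\<not> C a (p0+3)"
    proof
      assume "C a (p0+3)"
      then have "\<not> C (Suc a) (p0+3)" using nb[of a "p0+3"] w4 h2 assms by (auto simp: numeral_eq_Suc)
      then show False using assms by simp
    qed
    have t1: "2 \<le> a \<and> C (a-1) p0 \<and> C (a-1) (p0+1) \<and> C (a-1) (p0+2)"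
      using alt[of a "p0+1"] z1 z3 assms by (auto simp: numeral_eq_Suc)
    have t3: "2 \<le> a \<and> C (a-1) (p0+2) \<and> C (a-1) (p0+3) \<and> C (a-1) (p0+4)"
      using alt[of a "p0+3"] z1 z3 assms by (auto simp: numeral_eq_Suc)
    have a1: "1 \<le> a-1" "a-1 < m" using t1 assms by auto
    have "\<not> C (Suc (a-1)) (p0+2)"
      by (rule nb[OF a1]) (use t1 t3 assms in \<open>auto simp: numeral_eq_Suc\<close>)
    moreover have "Suc (a-1) = a" using t1 by simp
    ultimately show False using h2 by simp
  qed
  then show ?thesis using zero_nbrs(1,2)[of a "p0+2"] assms by (auto simp: numeral_eq_Suc)
qed

lemma IY2:
  assumes "1 \<le> a" "Suc (Suc (Suc a)) \<le> m" "2 \<le> p0" "p0 + 2 < n"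
    "\<not> C (Suc a) p0" "\<not> C (Suc a) (p0+2)" "C (Suc a) (p0+1)"
  shows "\<not> C (Suc (Suc a)) (p0+1)"
proof
  let ?y = "Suc (Suc a)"
  assume h: "C ?y (p0+1)"
  have y0: "C ?y p0" using zero_nbrs(3)[of "Suc a" p0] assms by auto
  have y2: "C ?y (p0+2)" using zero_nbrs(3)[of "Suc a" "p0+2"] assms by auto
  have z1: "\<not> C (Suc ?y) (p0+1)" using nb[of ?y "p0+1"] h y0 y2 assms by auto
  have ym: "\<not> C ?y (p0-1)"
  proof
    assume "C ?y (p0-1)"
    then have "\<not> C (Suc ?y) p0" using nb[of ?y p0] h y0 assms by auto
    then have "C (Suc ?y) (p0+1)" using zero_nbrs(2)[of "Suc ?y" p0] assms by auto
    then show False using z1 by simp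
  qed
  have yp: "\<not> C ?y (p0+3)"
  proof
    assume "C ?y (p0+3)"
    then have "\<not> C (Suc ?y) (p0+2)" using nb[of ?y "p0+2"] h y2 assms by (auto simp: numeral_eq_Suc)
    then have "C (Suc ?y) (p0+1)" using zero_nbrs(1)[of "Suc ?y" "p0+2"] assms by (auto simp: numeral_eq_Suc)
    then show False using z1 by simp
  qed
  have wa: "C a (p0-1) \<and> C a p0 \<and> C a (p0+1)"
    using alt[of "Suc a" p0] ym assms by auto
  have wb: "C a (p0+1) \<and> C a (p0+2) \<and> C a (p0+3)"
    using alt[of "Suc a" "p0+2"] yp assms by (auto simp: numeral_eq_Suc)
  have "\<not> C (Suc a) (p0+1)" using nb[of a "p0+1"] wa wb assms by auto
  then show False using assms by simp
qed

lemma IY3: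
  assumes "1 \<le> a" "Suc (Suc (Suc a)) \<le> m" "1 \<le> p0" "p0 + 3 < n"
    "\<not> C (Suc a) p0" "\<not> C (Suc a) (p0+3)" "C (Suc a) (p0+1)" "C (Suc a) (p0+2)"
  shows "C (Suc (Suc a)) (p0+1) \<noteq> C (Suc (Suc a)) (p0+2)"
proof -
  let ?y = "Suc (Suc a)"
  have y0: "C ?y p0" using zero_nbrs(3)[of "Suc a" p0] assms by auto
  have y3: "C ?y (p0+3)" using zero_nbrs(3)[of "Suc a" "p0+3"] assms by auto
  have "\<not> (C ?y (p0+1) \<and> C ?y (p0+2))"
    using four_ones[of ?y p0] y0 y3 assms by (auto simp: add.assoc)
  moreover have "\<not> (\<not> C ?y (p0+1) \<and> \<not> C ?y (p0+2))"
    using zero_nbrs(2)[of ?y "p0+1"] assms by auto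
  ultimately show ?thesis by blast
qed

lemma IY4:
  assumes "1 \<le> a" "Suc (Suc (Suc a)) \<le> m" "1 \<le> p0" "p0 + 4 < n"
    "\<not> C (Suc a) p0" "\<not> C (Suc a) (p0+4)" "C (Suc a) (p0+1)" "C (Suc a) (p0+2)" "C (Suc a) (p0+3)"
  shows "C (Suc (Suc a)) (p0+1) \<and> \<not> C (Suc (Suc a)) (p0+2) \<and> C (Suc (Suc a)) (p0+3)"
proof -
  have "\<not> C (Suc (Suc a)) (p0+2)" using nb[of "Suc a" "p0+2"] assms by (auto simp: numeral_eq_Suc)
  then show ?thesis using zero_nbrs(1,2)[of "Suc (Suc a)" "p0+2"] assms by (auto simp: numeral_eq_Suc)
qed

end

context es
begin

lemma gap:
  assumes "1 \<le> a" "Suc (Suc a) \<le> m" "1 \<le> p0" "\<not> C (Suc a) p0" "\<not> C (Suc a) p" "p \<le> n" "p0 < p"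
    "\<forall>q. p0 < q \<and> q < p \<longrightarrow> C (Suc a) q"
  shows "p = p0 + 2 \<or> p = p0 + 3 \<or> p = p0 + 4"
proof -
  have "p \<noteq> p0 + 1" using zero_nbrs(2)[of "Suc a" p0] assms by auto
  moreover have "\<not> p0 + 5 \<le> p"
  proof
    assume h: "p0 + 5 \<le> p"
    show False using four_ones[of "Suc a" "p0+1"] assms h by (auto simp: add.assoc)
  qed
  ultimately show ?thesis using assms(7) by linarith
qed

lemma first_gap:
  assumes "1 \<le> a" "Suc (Suc a) \<le> m" "\<not> C (Suc a) p" "1 \<le> p" "p \<le> n"
    "\<forall>q. 1 \<le> q \<and> q < p \<longrightarrow> C (Suc a) q"
  shows "p = 2 \<or> p = 3 \<or> p = 4"
proof -
  have "p \<noteq> 1" using colpos(1)[of "Suc a" p] assms by auto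
  moreover have "\<not> 5 \<le> p"
  proof
    assume h: "5 \<le> p"
    show False using four_ones[of "Suc a" 1] assms h by auto
  qed
  ultimately show ?thesis using assms by linarith
qed

lemma between:
  assumes "1 \<le> a" "Suc (Suc (Suc a)) \<le> m" "1 \<le> p0" "\<not> C (Suc a) p0" "\<not> C (Suc a) p" "p \<le> n" "p0 < p"
    "\<forall>q. p0 < q \<and> q < p \<longrightarrow> C (Suc a) q" "p0 < q" "q < p"
  shows "\<not> Tr n (C a) q \<and> \<not> Dr n (C a) q \<and> \<not> Tr n (C (Suc (Suc a))) q \<and> \<not> Dr n (C (Suc (Suc a))) q"
proof -
  let ?y = "Suc (Suc a)"
  have p0: "2 \<le> p0" "p0 < n" using colpos[of "Suc a" p0] assms by auto
  have pn: "p < n" using colpos[of "Suc a" p] assms by auto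
  have d: "p = p0 + 2 \<or> p = p0 + 3 \<or> p = p0 + 4" using gap[of a p0 p] assms by auto
  have xq: "C (Suc a) q" using assms by auto
  have t1: "\<not> Tr n (C a) q"
  proof
    assume "Tr n (C a) q"
    then have "\<not> C (Suc a) q" using nb[of a q] assms unfolding Tr_def by auto
    then show False using xq by simp
  qed
  have t2: "\<not> Dr n (C ?y) q"
  proof
    assume "Dr n (C ?y) q"
    then have "\<not> C (Suc a) q" using DX[of "Suc a" q] assms by auto
    then show False using xq by simp
  qed
  have w0: "C a p0" using above_zero[of a p0] assms by auto
  have wp: "C a p" using above_zero[of a p] assms by auto
  have y0: "C ?y p0" using zero_nbrs(3)[of "Suc a" p0] assms by auto
  have yp: "C ?y p" using zero_nbrs(3)[of "Suc a" p] assms by auto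
  have t3: "\<not> Dr n (C a) q"
  proof
    assume D: "Dr n (C a) q"
    then have D': "\<not> C a (q-1)" "\<not> C a (q+1)" "2 \<le> q" unfolding Dr_def by auto
    from d show False
    proof (elim disjE)
      assume "p = p0 + 2"
      then have "q = p0 + 1" using assms by auto
      then show False using D' wp \<open>p = p0 + 2\<close> by auto
    next
      assume e: "p = p0 + 3"
      then have "q = p0 + 1 \<or> q = p0 + 2" using assms by auto
      then show False using D' w0 wp e by (auto simp: numeral_eq_Suc)
    next
      assume e: "p = p0 + 4"
      have "C a (p0+1) \<and> \<not> C a (p0+2) \<and> C a (p0+3)"
        using IW4[of a p0] assms e pn by auto
      moreover have "q = p0 + 1 \<or> q = p0 + 2 \<or> q = p0 + 3" using assms e by auto
      ultimately show False using D' w0 wp e by (auto simp: numeral_eq_Suc)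
    qed
  qed
  have t4: "\<not> Tr n (C ?y) q"
  proof
    assume T: "Tr n (C ?y) q"
    then have T': "C ?y (q-1)" "C ?y q" "C ?y (q+1)" "2 \<le> q" unfolding Tr_def by auto
    from d show False
    proof (elim disjE)
      assume e: "p = p0 + 2"
      then have "\<not> C ?y (p0+1)" using IY2[of a p0] assms p0 pn by auto
      moreover have "q = p0 + 1" using assms e by auto
      ultimately show False using T' by auto
    next
      assume e: "p = p0 + 3"
      then have "C ?y (p0+1) \<noteq> C ?y (p0+2)" using IY3[of a p0] assms pn by auto
      moreover have "q = p0 + 1 \<or> q = p0 + 2" using assms e by auto
      ultimately show False using T' by auto
    next
      assume e: "p = p0 + 4"
      have "\<not> C ?y (p0+2)" using IY4[of a p0] assms e pn by auto
      moreover have "q = p0 + 1 \<or> q = p0 + 2 \<or> q = p0 + 3" using assms e by auto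
      ultimately show False using T' by (auto simp: numeral_eq_Suc)
    qed
  qed
  show ?thesis using t1 t2 t3 t4 by simp
qed

end

context es
begin

definition ClaimG :: "nat \<Rightarrow> nat \<Rightarrow> bool" where
  "ClaimG a p \<longleftrightarrow> (Dr n (C (Suc (Suc a))) p \<longrightarrow> PT n (C (Suc (Suc a))) (p-1)) \<and>
     (\<not> PT n (C (Suc (Suc a))) p \<longrightarrow> (C a (p+1) \<and> \<not> C (Suc (Suc a)) (p+1)) \<or>
        (C a (p+1) = C (Suc (Suc a)) (p+1) \<and> \<not> PT n (C a) p))"

lemma local_facts:
  assumes "1 \<le> a" "Suc (Suc (Suc a)) \<le> m" "\<not> C (Suc a) p" "1 \<le> p" "p \<le> n"
  shows "PT n (C (Suc (Suc a))) p = ((C (Suc (Suc a)) (p-1) \<and> C (Suc (Suc a)) (p+1)) \<or>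
            (PT n (C (Suc (Suc a))) (p-1) \<and> \<not> (\<not> C (Suc (Suc a)) (p-1) \<and> \<not> C (Suc (Suc a)) (p+1))))"
    and "PT n (C a) p = ((C a (p-1) \<and> C a (p+1)) \<or>
            (PT n (C a) (p-1) \<and> \<not> (\<not> C a (p-1) \<and> \<not> C a (p+1))))"
    and "Dr n (C (Suc (Suc a))) p = (\<not> C (Suc (Suc a)) (p-1) \<and> \<not> C (Suc (Suc a)) (p+1))"
    and "Dr n (C a) p = (\<not> C a (p-1) \<and> \<not> C a (p+1))"
    and "Dr n (C (Suc (Suc a))) p \<longrightarrow> C a (p-1) \<and> C a (p+1)"
proof -
  have p: "2 \<le> p" "p < n" using colpos[of "Suc a" p] assms by auto
  have yp: "C (Suc (Suc a)) p" using zero_nbrs(3)[of "Suc a" p] assms by auto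
  have wp: "C a p" using above_zero[of a p] assms by auto
  show "PT n (C (Suc (Suc a))) p = ((C (Suc (Suc a)) (p-1) \<and> C (Suc (Suc a)) (p+1)) \<or>
            (PT n (C (Suc (Suc a))) (p-1) \<and> \<not> (\<not> C (Suc (Suc a)) (p-1) \<and> \<not> C (Suc (Suc a)) (p+1))))"
    using PT_step[of p n "C (Suc (Suc a))"] p yp unfolding Tr_def Dr_def by auto
  show "PT n (C a) p = ((C a (p-1) \<and> C a (p+1)) \<or>
            (PT n (C a) (p-1) \<and> \<not> (\<not> C a (p-1) \<and> \<not> C a (p+1))))"
    using PT_step[of p n "C a"] p wp unfolding Tr_def Dr_def by auto
  show "Dr n (C (Suc (Suc a))) p = (\<not> C (Suc (Suc a)) (p-1) \<and> \<not> C (Suc (Suc a)) (p+1))"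
    using p yp unfolding Dr_def by auto
  show "Dr n (C a) p = (\<not> C a (p-1) \<and> \<not> C a (p+1))"
    using p wp unfolding Dr_def by auto
  show "Dr n (C (Suc (Suc a))) p \<longrightarrow> C a (p-1) \<and> C a (p+1)"
    using DW[of "Suc a" p] assms by auto
qed

lemma stepG:
  assumes a: "2 \<le> a" "a + 3 \<le> m" and Hw: "Hr n (C a)"
    and z0: "1 \<le> p0" "\<not> C (Suc a) p0" and z: "\<not> C (Suc a) p" "p \<le> n" and lt: "p0 < p"
    and btw: "\<forall>q. p0 < q \<and> q < p \<longrightarrow> C (Suc a) q"
    and IH: "ClaimG a p0"
  shows "ClaimG a p"
proof -
  let ?y = "Suc (Suc a)"
  have a': "1 \<le> a" "Suc (Suc (Suc a)) \<le> m" "Suc a < m" using a by auto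
  have p0: "2 \<le> p0" "p0 < n" using colpos[of "Suc a" p0] a' z0 lt z by auto
  have pn: "p < n" using colpos[of "Suc a" p] a' z lt z0 by auto
  have d: "p = p0 + 2 \<or> p = p0 + 3 \<or> p = p0 + 4" using gap[of a p0 p] a' z0 z lt btw by auto
  have bt: "\<And>q. p0 < q \<Longrightarrow> q < p \<Longrightarrow> \<not> Tr n (C a) q \<and> \<not> Dr n (C a) q \<and> \<not> Tr n (C ?y) q \<and> \<not> Dr n (C ?y) q"
    using between[of a p0 p] a' z0 z lt btw by blast
  have PTy: "PT n (C ?y) (p-1) = PT n (C ?y) p0"
    by (rule PT_const) (use lt d bt in auto)
  have PTw: "PT n (C a) (p-1) = PT n (C a) p0"
    by (rule PT_const) (use lt d bt in auto)
  note LF = local_facts[of a p, OF a'(1,2) z(1) _ z(2)]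
  have pp: "1 \<le> p" using lt z0 by auto
  have Hwp: "Dr n (C a) p \<longrightarrow> PT n (C a) (p-1)" using Hw unfolding Hr_def by blast
  from IH have IH2: "\<not> PT n (C ?y) p0 \<longrightarrow> (C a (p0+1) \<and> \<not> C ?y (p0+1)) \<or>
        (C a (p0+1) = C ?y (p0+1) \<and> \<not> PT n (C a) p0)"
    unfolding ClaimG_def by blast
  from d show ?thesis
  proof (elim disjE)
    assume e: "p = p0 + 2"
    have i1: "\<not> C a (p0+1)" using IW2[of a p0] a' z0 z e pn btw by auto
    have i2: "\<not> C ?y (p0+1)" using IY2[of a p0] a' z0 z e pn btw p0 by auto
    have pm: "p - 1 = p0 + 1" using e by simp
    show ?thesis unfolding ClaimG_def using LF[OF pp] PTy PTw Hwp IH2 i1 i2 pm by auto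
  next
    assume e: "p = p0 + 3"
    have i1: "C a (p0+1) \<noteq> C a (p0+2)" using IW3[of a p0] a' z0 z e pn btw by auto
    have i2: "C ?y (p0+1) \<noteq> C ?y (p0+2)" using IY3[of a p0] a' z0 z e pn btw by auto
    have pm: "p - 1 = p0 + 2" using e by simp
    show ?thesis unfolding ClaimG_def using LF[OF pp] PTy PTw Hwp IH2 i1 i2 pm by auto
  next
    assume e: "p = p0 + 4"
    have i1: "C a (p0+1) \<and> C a (p0+3)" using IW4[of a p0] a' z0 z e pn btw by auto
    have i2: "C ?y (p0+1) \<and> C ?y (p0+3)" using IY4[of a p0] a' z0 z e pn btw by auto
    have pm: "p - 1 = p0 + 3" using e by simp
    show ?thesis unfolding ClaimG_def using LF[OF pp] PTy PTw Hwp IH2 i1 i2 pm by auto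
  qed
qed

end

lemma PT_3: "PT n \<rho> 3 = (Tr n \<rho> 3 \<or> (Tr n \<rho> 2 \<and> \<not> Dr n \<rho> 3))"
  using PT_step[of 3 n \<rho>] PT_2[of n \<rho>] by simp

lemma PT_4: "PT n \<rho> 4 = (Tr n \<rho> 4 \<or> (PT n \<rho> 3 \<and> \<not> Dr n \<rho> 4))"
  using PT_step[of 4 n \<rho>] by simp

context es
begin

lemma col1: "1 \<le> i \<Longrightarrow> i \<le> m \<Longrightarrow> 1 \<le> n \<Longrightarrow> C i 1"
  using colpos(1)[of i 1] by fastforce

lemma edgeG:
  assumes a: "2 \<le> a" "a + 3 \<le> m" and Hw: "Hr n (C a)"
    and z: "\<not> C (Suc a) p" "1 \<le> p" "p \<le> n"
    and btw: "\<forall>q. 1 \<le> q \<and> q < p \<longrightarrow> C (Suc a) q"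
  shows "ClaimG a p"
proof -
  let ?y = "Suc (Suc a)"
  have a': "1 \<le> a" "Suc (Suc (Suc a)) \<le> m" "Suc a < m" "Suc (Suc a) \<le> m" using a by auto
  have pn: "2 \<le> p" "p < n" using colpos[of "Suc a" p] a' z by auto
  have d: "p = 2 \<or> p = 3 \<or> p = 4" using first_gap[of a p] a' z btw by auto
  have w1: "C a 1" using col1[of a] a' pn by auto
  have y1: "C ?y 1" using col1[of ?y] a' pn by auto
  have x1: "C (Suc a) 1" using col1[of "Suc a"] a' pn by auto
  have wp: "C a p" using above_zero[of a p] a' z by auto
  have yp: "C ?y p" using zero_nbrs(3)[of "Suc a" p] a' z by auto
  have Hwp: "\<And>c. Dr n (C a) c \<Longrightarrow> PT n (C a) (c-1)" using Hw unfolding Hr_def by blast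
  from d show ?thesis
  proof (elim disjE)
    assume e: "p = 2"
    show ?thesis unfolding ClaimG_def using e pn w1 y1 wp yp
      by (auto simp: PT_2 Tr_def Dr_def)
  next
    assume e: "p = 3"
    have x2: "C (Suc a) 2" using btw e by auto
    have w2: "\<not> C a 2"
    proof
      assume "C a 2"
      then have "\<not> C (Suc a) 2" using nb[of a 2] w1 wp e a' pn by auto
      then show False using x2 by simp
    qed
    have nDy: "\<not> Dr n (C ?y) 3" using DW[of "Suc a" 3] w2 a' by auto
    have nDw: "\<not> Dr n (C a) 3"
    proof
      assume D: "Dr n (C a) 3"
      then have "PT n (C a) 2" using Hwp[of 3] by simp
      then show False using w2 by (simp add: PT_2 Tr_def)
    qed
    show ?thesis unfolding ClaimG_def using e pn w1 y1 wp yp w2 nDy nDw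
      by (auto simp: PT_2 PT_3 Tr_def Dr_def)
  next
    assume e: "p = 4"
    have x2: "C (Suc a) 2" "C (Suc a) 3" using btw e by auto
    have y2: "\<not> C ?y 2" using nb[of "Suc a" 2] x1 x2 a' pn e by auto
    have y3: "C ?y 3" using zero_nbrs(2)[of ?y 2] y2 a' pn e by auto
    have w23: "\<not> (C a 2 \<and> C a 3)"
    proof
      assume "C a 2 \<and> C a 3"
      then have "\<not> C (Suc a) 2" using nb[of a 2] w1 a' pn e by auto
      then show False using x2 by simp
    qed
    have PTw3: "\<not> PT n (C a) 3" using w23 wp e by (auto simp: PT_3 Tr_def Dr_def)
    have nDw: "\<not> Dr n (C a) 4"
    proof
      assume D: "Dr n (C a) 4"
      then have "PT n (C a) 3" using Hwp[of 4] by simp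
      then show False using PTw3 by simp
    qed
    show ?thesis unfolding ClaimG_def using e pn w1 y1 wp yp y2 y3 w23 nDw PTw3
      by (auto simp: PT_3 PT_4 Tr_def Dr_def)
  qed
qed

end

context es
begin

lemma allClaimG:
  assumes a: "2 \<le> a" "a + 3 \<le> m" and Hw: "Hr n (C a)"
  shows "1 \<le> p \<Longrightarrow> p \<le> n \<Longrightarrow> \<not> C (Suc a) p \<Longrightarrow> ClaimG a p"
proof (induction p rule: less_induct)
  case (less p)
  let ?S = "{q. 1 \<le> q \<and> q < p \<and> \<not> C (Suc a) q}"
  show ?case
  proof (cases "?S = {}")
    case True
    then have "\<forall>q. 1 \<le> q \<and> q < p \<longrightarrow> C (Suc a) q" by auto
    then show ?thesis using edgeG[OF a Hw] less.prems by blast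
  next
    case False
    have fin: "finite ?S" by (rule finite_subset[of _ "{..<p}"]) auto
    define p0 where "p0 = Max ?S"
    have p0S: "p0 \<in> ?S" unfolding p0_def using fin False by (rule Max_in)
    have btw: "\<forall>q. p0 < q \<and> q < p \<longrightarrow> C (Suc a) q"
    proof (intro allI impI)
      fix q assume q: "p0 < q \<and> q < p"
      show "C (Suc a) q"
      proof (rule ccontr)
        assume "\<not> C (Suc a) q"
        then have "q \<in> ?S" using q p0S by auto
        then have "q \<le> p0" unfolding p0_def using Max_ge[OF fin] by blast
        then show False using q by simp
      qed
    qed
    have IH: "ClaimG a p0" using less.IH[of p0] p0S less.prems by auto
    show ?thesis using stepG[OF a Hw, of p0 p] p0S less.prems btw IH by auto
  qed
qed

lemma HG:
  assumes a: "2 \<le> a" "a + 3 \<le> m" and Hw: "Hr n (C a)"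
  shows "Hr n (C (Suc (Suc a)))"
  unfolding Hr_def
proof (intro allI impI)
  fix c assume D: "Dr n (C (Suc (Suc a))) c"
  have x: "\<not> C (Suc a) c" using DX[of "Suc a" c] D a by auto
  have c: "1 \<le> c" "c \<le> n" using D unfolding Dr_def by auto
  show "PT n (C (Suc (Suc a))) (c - 1)"
    using allClaimG[OF a Hw c x] D unfolding ClaimG_def by blast
qed

lemma H2:
  assumes "3 \<le> m"
  shows "Hr n (C 2)"
  unfolding Hr_def
proof (intro allI impI)
  fix c assume D: "Dr n (C 2) c"
  have "2 \<le> (1::nat)" using DW[of 1 c] D assms by (simp add: numeral_2_eq_2)
  then show "PT n (C 2) (c - 1)" by simp
qed

definition ClaimB :: "nat \<Rightarrow> bool" where
  "ClaimB p \<longleftrightarrow> (Dr n (C 3) p \<longrightarrow> PT n (C 3) (p-1)) \<and> (\<not> PT n (C 3) p \<longrightarrow> \<not> C 3 (p+1))"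

lemma noD2:
  assumes "3 \<le> m"
  shows "\<not> Dr n (C 2) q"
proof
  assume D: "Dr n (C 2) q"
  have "2 \<le> (1::nat)" using DW[of 1 q] D assms by (simp add: numeral_2_eq_2)
  then show False by simp
qed

lemma stepB:
  assumes m: "4 \<le> m"
    and z0: "1 \<le> p0" "\<not> C 2 p0" and z: "\<not> C 2 p" "p \<le> n" and lt: "p0 < p"
    and btw: "\<forall>q. p0 < q \<and> q < p \<longrightarrow> C 2 q"
    and IH: "ClaimB p0"
  shows "ClaimB p"
proof -
  have two: "(2::nat) = Suc 1" "(3::nat) = Suc (Suc 1)" by simp_all
  have a': "1 \<le> (1::nat)" "Suc (Suc (Suc 1)) \<le> m" "Suc 1 < m" "Suc (Suc 1) \<le> m" using m by auto
  have z0': "\<not> C (Suc 1) p0" and z': "\<not> C (Suc 1) p" using z0 z by (simp_all add: two)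
  have btw': "\<forall>q. p0 < q \<and> q < p \<longrightarrow> C (Suc 1) q" using btw by (simp add: two)
  have p0: "2 \<le> p0" "p0 < n" using colpos[of "Suc 1" p0] a' z0' z0 lt z by auto
  have pn: "p < n" using colpos[of "Suc 1" p] a' z' z lt z0 by auto
  have d: "p = p0 + 2 \<or> p = p0 + 3 \<or> p = p0 + 4" using gap[of 1 p0 p] a' z0' z' z0 z lt btw' by auto
  have bt: "\<And>q. p0 < q \<Longrightarrow> q < p \<Longrightarrow> \<not> Tr n (C 3) q \<and> \<not> Dr n (C 3) q"
    using between[of 1 p0 p] a' z0' z' z0 z lt btw' by (auto simp: two)
  have PTy: "PT n (C 3) (p-1) = PT n (C 3) p0"
    by (rule PT_const) (use lt d bt in auto)
  have pp: "1 \<le> p" using lt z0 by auto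
  have LF1: "PT n (C 3) p = ((C 3 (p-1) \<and> C 3 (p+1)) \<or>
            (PT n (C 3) (p-1) \<and> \<not> (\<not> C 3 (p-1) \<and> \<not> C 3 (p+1))))"
    using local_facts(1)[of 1 p] a' z' pp z by (simp add: two)
  have LF3: "Dr n (C 3) p = (\<not> C 3 (p-1) \<and> \<not> C 3 (p+1))"
    using local_facts(3)[of 1 p] a' z' pp z by (simp add: two)
  from IH have IH2: "\<not> PT n (C 3) p0 \<longrightarrow> \<not> C 3 (p0+1)" unfolding ClaimB_def by blast
  from d show ?thesis
  proof (elim disjE)
    assume e: "p = p0 + 2"
    have "Dr n (C 2) (p0+1)" using z0 z e btw p0 pn unfolding Dr_def by auto
    then show ?thesis using noD2 m by auto
  next
    assume e: "p = p0 + 3"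
    have i2: "C 3 (p0+1) \<noteq> C 3 (p0+2)" using IY3[of 1 p0] a' z0' z' z0 e pn btw' by (auto simp: two)
    have pm: "p - 1 = p0 + 2" using e by simp
    show ?thesis unfolding ClaimB_def using LF1 LF3 PTy IH2 i2 pm by auto
  next
    assume e: "p = p0 + 4"
    have i2: "C 3 (p0+1) \<and> C 3 (p0+3)" using IY4[of 1 p0] a' z0' z' z0 e pn btw' by (auto simp: two)
    have pm: "p - 1 = p0 + 3" using e by simp
    show ?thesis unfolding ClaimB_def using LF1 LF3 PTy IH2 i2 pm by auto
  qed
qed

lemma edgeB:
  assumes m: "4 \<le> m"
    and z: "\<not> C 2 p" "1 \<le> p" "p \<le> n"
    and btw: "\<forall>q. 1 \<le> q \<and> q < p \<longrightarrow> C 2 q"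
  shows "ClaimB p"
proof -
  have two: "(2::nat) = Suc 1" "(3::nat) = Suc (Suc 1)" by simp_all
  have a': "1 \<le> (1::nat)" "Suc (Suc (Suc 1)) \<le> m" "Suc 1 < m" "Suc (Suc 1) \<le> m" using m by auto
  have z': "\<not> C (Suc 1) p" using z by (simp add: two)
  have btw': "\<forall>q. 1 \<le> q \<and> q < p \<longrightarrow> C (Suc 1) q" using btw by (simp add: two)
  have pn: "2 \<le> p" "p < n" using colpos[of "Suc 1" p] a' z' z by auto
  have d: "p = 2 \<or> p = 3 \<or> p = 4" using first_gap[of 1 p] a' z' z btw' by auto
  have y1: "C 3 1" using col1[of 3] m pn by auto
  have x1: "C 2 1" using col1[of 2] m pn by auto
  have w1: "C 1 1" using col1[of 1] m pn by auto
  have yp: "C 3 p" using zero_nbrs(3)[of 2 p] m z by (auto simp: two)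
  from d show ?thesis
  proof (elim disjE)
    assume e: "p = 2"
    show ?thesis unfolding ClaimB_def using e pn y1 yp
      by (auto simp: PT_2 Tr_def Dr_def)
  next
    assume e: "p = 3"
    have x2: "C 2 2" using btw e by auto
    have w3: "C 1 3" using above_zero[of 1 3] z e m by (simp add: two)
    have w2: "\<not> C 1 2"
    proof
      assume "C 1 2"
      then have "\<not> C (Suc 1) 2" using nb[of 1 2] w1 w3 m pn e by auto
      then show False using x2 by (simp add: two)
    qed
    have "False" using alt[of 1 2] w2 z e pn m by (auto simp: two)
    then show ?thesis by simp
  next
    assume e: "p = 4"
    have x2: "C 2 2" "C 2 3" using btw e by auto
    have y2: "\<not> C 3 2" using nb[of 2 2] x1 x2 m pn e by (auto simp: two)
    have y3: "C 3 3" using zero_nbrs(2)[of 3 2] y2 m pn e by auto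
    show ?thesis unfolding ClaimB_def using e pn y1 yp y2 y3
      by (auto simp: PT_3 PT_4 Tr_def Dr_def)
  qed
qed

lemma allClaimB:
  assumes m: "4 \<le> m"
  shows "1 \<le> p \<Longrightarrow> p \<le> n \<Longrightarrow> \<not> C 2 p \<Longrightarrow> ClaimB p"
proof (induction p rule: less_induct)
  case (less p)
  let ?S = "{q. 1 \<le> q \<and> q < p \<and> \<not> C 2 q}"
  show ?case
  proof (cases "?S = {}")
    case True
    then have "\<forall>q. 1 \<le> q \<and> q < p \<longrightarrow> C 2 q" by auto
    then show ?thesis using edgeB[OF m] less.prems by blast
  next
    case False
    have fin: "finite ?S" by (rule finite_subset[of _ "{..<p}"]) auto
    define p0 where "p0 = Max ?S"
    have p0S: "p0 \<in> ?S" unfolding p0_def using fin False by (rule Max_in)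
    have btw: "\<forall>q. p0 < q \<and> q < p \<longrightarrow> C 2 q"
    proof (intro allI impI)
      fix q assume q: "p0 < q \<and> q < p"
      show "C 2 q"
      proof (rule ccontr)
        assume "\<not> C 2 q"
        then have "q \<in> ?S" using q p0S by auto
        then have "q \<le> p0" unfolding p0_def using Max_ge[OF fin] by blast
        then show False using q by simp
      qed
    qed
    have IH: "ClaimB p0" using less.IH[of p0] p0S less.prems by auto
    show ?thesis using stepB[OF m, of p0 p] p0S less.prems btw IH by auto
  qed
qed

lemma H3:
  assumes m: "4 \<le> m"
  shows "Hr n (C 3)"
  unfolding Hr_def
proof (intro allI impI)
  fix c assume D: "Dr n (C 3) c"
  have x: "\<not> C 2 c" using DX[of 2 c] D m by (auto simp: numeral_eq_Suc)
  have c: "1 \<le> c" "c \<le> n" using D unfolding Dr_def by auto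
  show "PT n (C 3) (c - 1)"
    using allClaimB[OF m c x] D unfolding ClaimB_def by blast
qed

lemma Hall: "2 \<le> r \<Longrightarrow> r + 1 \<le> m \<Longrightarrow> Hr n (C r)"
proof (induction r rule: less_induct)
  case (less r)
  show ?case
  proof (cases "r \<le> 3")
    case True
    then have "r = 2 \<or> r = 3" using less.prems by auto
    then show ?thesis using H2 H3 less.prems by auto
  next
    case False
    define a where "a = r - 2"
    have a: "2 \<le> a" "a + 3 \<le> m" using False less.prems unfolding a_def by auto
    have "Hr n (C a)" using less.IH[of a] a unfolding a_def using False by auto
    then have "Hr n (C (Suc (Suc a)))" using HG a by blast
    moreover have "Suc (Suc a) = r" using False unfolding a_def by auto
    ultimately show ?thesis by simp
  qed
qed

end

theorem mainTheorem12:
  fixes m n :: nat and C :: "nat \<Rightarrow> nat \<Rightarrow> bool"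
  assumes "m > 2" and "ES m n C"
  shows "\<not> (\<exists>j. 2 \<le> j \<and> j \<le> n - 1 \<and> \<not> C (m - 1) (j - 1) \<and> C (m - 1) j \<and> \<not> C (m - 1) (j + 1))"
proof
  assume "\<exists>j. 2 \<le> j \<and> j \<le> n - 1 \<and> \<not> C (m - 1) (j - 1) \<and> C (m - 1) j \<and> \<not> C (m - 1) (j + 1)"
  then obtain j where j: "2 \<le> j" "j \<le> n - 1" "\<not> C (m - 1) (j - 1)" "C (m - 1) j" "\<not> C (m - 1) (j + 1)"
    by blast
  interpret es m n C by standard (rule assms(2))
  have D: "Dr n (C (m-1)) j" using j unfolding Dr_def by auto
  have H: "Hr n (C (m-1))" using Hall[of "m-1"] assms(1) by auto
  have "PT n (C (m-1)) (j-1)" using H D unfolding Hr_def by blast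
  then obtain p where p: "p \<le> j - 1" "Tr n (C (m-1)) p" using PT_T by blast
  then have t: "2 \<le> p" "p + 1 \<le> n" "C (m-1) (p-1)" "C (m-1) p" "C (m-1) (p+1)" unfolding Tr_def by auto
  have "\<not> C (Suc (m-1)) p" using nb[of "m-1" p] t assms(1) by auto
  moreover have "C m p" using rowm_full[of p] t assms(1) by auto
  ultimately show False using assms(1) by (simp add: Suc_diff_1)
qed

end
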